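(* Let $G^*=(V_L,V_R,E^* )$ be drawn uniformly from $\mathcal{G}_{m,n,s,t}$ (assumed nonempty), and let $F$ be a viable set of edges. (1) Let $u\in V_L$ with $\deg_F(u)<t$, and let $v$ be uniformly sampled from $N_{G^*}(u)\setminus N_F(u)$. Then $$\Pr_{G^*,v}\left[\deg_F(v)>0\ \middle|\ F\subseteq E^*\right]\le\frac{|\{x\in V_R:\deg_F(x)>0\}|}{|V_R|}.$$ (2) Let $u\in V_R$ with $\deg_F(u)<s$, and let $v$ be uniformly sampled from $N_{G^*}(u)\setminus N_F(u)$. Then $$\Pr_{G^*,v}\left[\deg_F(v)>0\ \middle|\ F\subseteq E^*\right]\le\frac{|\{x\in V_L:\deg_F(x)>0\}|}{|V_L|}.$$
   Context: $\mathcal{G}_{m,n,s,t}$ is the set of bipartite graphs on fixed vertex sets $V_L$ ($|V_L|=n$, each of degree $t$) and $V_R$ ($|V_R|=m$, each of degree $s$). For a set of edges $F\subseteq\binom{V_L\cup V_R}{2}$ and a vertex $v$, $N_F(v)=\{u:\{v,u\}\in F\}$ and $\deg_F(v)=|N_F(v)|$. $F$ is viable if $F\subseteq E(G)$ for some $G\in\mathcal{G}_{m,n,s,t}$. *)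

theory Defs
  imports "HOL-Probability.Probability_Mass_Function"
begin

definition nbr :: "'a set set \<Rightarrow> 'a \<Rightarrow> 'a set" where
  "nbr F v = {u. {v, u} \<in> F}"

definition deg :: "'a set set \<Rightarrow> 'a \<Rightarrow> nat" where
  "deg F v = card (nbr F v)"

text \<open>The class G_{m,n,s,t}: bipartite graphs (as edge sets) between the fixed
  vertex sets VL (|VL| = n, each vertex of degree t) and VR (|VR| = m, each of degree s).\<close>
definition bip_graphs :: "'a set \<Rightarrow> 'a set \<Rightarrow> nat \<Rightarrow> nat \<Rightarrow> 'a set set set" where
  "bip_graphs VL VR s t =
     {E. E \<subseteq> {{x, y} | x y. x \<in> VL \<and> y \<in> VR}
         \<and> (\<forall>x\<in>VL. deg E x = t) \<and> (\<forall>y\<in>VR. deg E y = s)}"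

definition viable :: "'a set \<Rightarrow> 'a set \<Rightarrow> nat \<Rightarrow> nat \<Rightarrow> 'a set set \<Rightarrow> bool" where
  "viable VL VR s t F \<longleftrightarrow> (\<exists>G\<in>bip_graphs VL VR s t. F \<subseteq> G)"

text \<open>Joint law of (G*, v): G* uniform on G_{m,n,s,t} conditioned on F \<subseteq> E(G*),
  then v uniform on N_{G*}(u) - N_F(u). We return the law of v.\<close>
definition sample_v :: "'a set \<Rightarrow> 'a set \<Rightarrow> nat \<Rightarrow> nat \<Rightarrow> 'a set set \<Rightarrow> 'a \<Rightarrow> 'a pmf" where
  "sample_v VL VR s t F u =
     cond_pmf (pmf_of_set (bip_graphs VL VR s t)) {G. F \<subseteq> G}
       \<bind> (\<lambda>G. pmf_of_set (nbr G u - nbr F u))"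

end

theory Submission imports Defs begin

lemma nbr_sym: "a \<in> nbr G b \<longleftrightarrow> b \<in> nbr G a"
  by (simp add: nbr_def insert_commute)

lemma nbr_mono: "F \<subseteq> G \<Longrightarrow> nbr F v \<subseteq> nbr G v"
  by (auto simp: nbr_def)

definition swp :: "'a set set \<Rightarrow> 'a \<Rightarrow> 'a \<Rightarrow> 'a \<Rightarrow> 'a \<Rightarrow> 'a set set" where
  "swp G a1 b1 a2 b2 = insert {a1,b2} (insert {a2,b1} (G - {{a1,b1},{a2,b2}}))"

lemma nbr_swp:
  assumes "a1 \<noteq> a2" "b1 \<noteq> b2" "a1 \<noteq> b1" "a1 \<noteq> b2" "a2 \<noteq> b1" "a2 \<noteq> b2"
  shows "nbr (swp G a1 b1 a2 b2) z =
    (if z = a1 then insert b2 (nbr G a1 - {b1})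
     else if z = a2 then insert b1 (nbr G a2 - {b2})
     else if z = b1 then insert a2 (nbr G b1 - {a1})
     else if z = b2 then insert a1 (nbr G b2 - {a2})
     else nbr G z)"
  using assms by (auto simp: nbr_def swp_def doubleton_eq_iff)

lemma swp_inv:
  assumes "a1 \<noteq> a2" "b1 \<noteq> b2" "a1 \<noteq> b1" "a1 \<noteq> b2" "a2 \<noteq> b1" "a2 \<noteq> b2"
    "{a1,b1} \<in> G" "{a2,b2} \<in> G" "{a1,b2} \<notin> G" "{a2,b1} \<notin> G"
  shows "swp (swp G a1 b1 a2 b2) a1 b2 a2 b1 = G"
  using assms unfolding swp_def by (auto simp: doubleton_eq_iff)

lemma card_swap1:
  assumes "finite S" "y \<in> S" "x \<notin> S"
  shows "card (insert x (S - {y})) = card S"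
  using assms by (simp add: card_Diff_singleton) (metis card_Diff1_less card_gt_0_iff Suc_pred empty_iff)

lemma card_diff_sym:
  assumes "finite A" "finite B" "card A = card B"
  shows "card (A - B) = card (B - A)"
  using assms by (metis Int_commute card_Diff_subset_Int finite_Int)

lemma cond_pmf_of_set:
  assumes "finite B" "B \<inter> C \<noteq> {}"
  shows "cond_pmf (pmf_of_set B) C = pmf_of_set (B \<inter> C)"
proof (rule pmf_eqI)
  fix x
  have ne: "B \<noteq> {}" using assms by auto
  have "set_pmf (pmf_of_set B) \<inter> C \<noteq> {}" using assms ne by simp
  then show "pmf (cond_pmf (pmf_of_set B) C) x = pmf (pmf_of_set (B \<inter> C)) x"
    using assms ne by (simp add: pmf_cond measure_pmf_of_set indicator_def Int_commute)
qed

lemma prob_bind_pmf_of_set: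
  assumes "finite A" "A \<noteq> {}" "\<And>G. G \<in> A \<Longrightarrow> finite (S G) \<and> S G \<noteq> {}"
  shows "measure_pmf.prob (pmf_of_set A \<bind> (\<lambda>G. pmf_of_set (S G))) X
     = (\<Sum>G\<in>A. real (card (S G \<inter> X)) / real (card (S G))) / real (card A)"
proof -
  have "measure_pmf.prob (pmf_of_set A \<bind> (\<lambda>G. pmf_of_set (S G))) X
     = measure_pmf.expectation (pmf_of_set A \<bind> (\<lambda>G. pmf_of_set (S G))) (indicator X)"
    by simp
  also have "\<dots> = (\<Sum>a\<in>A. measure_pmf.expectation (pmf_of_set (S a)) (indicator X) /\<^sub>R real (card A))"
    using assms by (intro pmf_expectation_bind_pmf_of_set) auto
  also have "\<dots> = (\<Sum>a\<in>A. real (card (S a \<inter> X)) / real (card (S a)) / real (card A))"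
    using assms by (intro sum.cong) (auto simp: measure_pmf_of_set field_simps)
  finally show ?thesis by (simp add: sum_divide_distrib)
qed

lemma double_count:
  assumes "finite A" "finite X"
  shows "(\<Sum>G\<in>A. card {y\<in>X. R G y}) = (\<Sum>y\<in>X. card {G\<in>A. R G y})"
proof -
  have "(\<Sum>G\<in>A. card {y\<in>X. R G y}) = (\<Sum>G\<in>A. \<Sum>y\<in>X. if R G y then 1 else 0)"
    by (intro sum.cong refl) (simp only: card_eq_sum sum.inter_filter[OF assms(2)])
  also have "\<dots> = (\<Sum>y\<in>X. \<Sum>G\<in>A. if R G y then 1 else 0)" by (rule sum.swap)
  also have "\<dots> = (\<Sum>y\<in>X. card {G\<in>A. R G y})"
    by (intro sum.cong refl) (simp only: card_eq_sum sum.inter_filter[OF assms(1)])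
  finally show ?thesis .
qed

lemma card_split:
  assumes "finite A"
  shows "card {G\<in>A. p G} = card {G\<in>A. p G \<and> q G} + card {G\<in>A. p G \<and> \<not> q G}"
proof -
  have "{G\<in>A. p G} = {G\<in>A. p G \<and> q G} \<union> {G\<in>A. p G \<and> \<not> q G}" by auto
  moreover have "card ({G\<in>A. p G \<and> q G} \<union> {G\<in>A. p G \<and> \<not> q G}) = card {G\<in>A. p G \<and> q G} + card {G\<in>A. p G \<and> \<not> q G}"
    by (rule card_Un_disjoint) (use assms in auto)
  ultimately show ?thesis by simp
qed

locale bip =
  fixes VL VR :: "'a set" and s t :: nat
  assumes finL: "finite VL" and finR: "finite VR" and disj: "VL \<inter> VR = {}"
begin

abbreviation "B \<equiv> bip_graphs VL VR s t"

lemma edge_B: assumes "G \<in> B" "{v,a} \<in> G"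
  shows "(v \<in> VL \<and> a \<in> VR) \<or> (v \<in> VR \<and> a \<in> VL)"
proof -
  obtain x y where "{v,a} = {x,y}" "x \<in> VL" "y \<in> VR" using assms by (auto simp: bip_graphs_def)
  then show ?thesis by (auto simp: doubleton_eq_iff)
qed

lemma nbr_L: "G \<in> B \<Longrightarrow> v \<in> VL \<Longrightarrow> nbr G v \<subseteq> VR"
  using disj edge_B by (auto simp: nbr_def)

lemma nbr_R: "G \<in> B \<Longrightarrow> v \<in> VR \<Longrightarrow> nbr G v \<subseteq> VL"
  using disj edge_B by (auto simp: nbr_def)

lemma nbr_out: "G \<in> B \<Longrightarrow> v \<notin> VL \<Longrightarrow> v \<notin> VR \<Longrightarrow> nbr G v = {}"
  using edge_B by (auto simp: nbr_def)

lemma finite_nbr: "G \<in> B \<Longrightarrow> finite (nbr G v)"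
  by (metis finL finR finite.emptyI nbr_L nbr_R nbr_out rev_finite_subset)

lemma finite_B: "finite B"
proof -
  have "B \<subseteq> Pow ((\<lambda>(x,y). {x,y}) ` (VL \<times> VR))"
    by (auto simp: bip_graphs_def)
  then show ?thesis using finL finR by (meson finite_Pow_iff finite_SigmaI finite_imageI rev_finite_subset)
qed

lemma swp_B:
  assumes G: "G \<in> B" and "a1 \<in> VL" "a2 \<in> VL" "b1 \<in> VR" "b2 \<in> VR" "a1 \<noteq> a2" "b1 \<noteq> b2"
    "{a1,b1} \<in> G" "{a2,b2} \<in> G" "{a1,b2} \<notin> G" "{a2,b1} \<notin> G"
  shows "swp G a1 b1 a2 b2 \<in> B"
proof -
  have d: "a1 \<noteq> b1" "a1 \<noteq> b2" "a2 \<noteq> b1" "a2 \<noteq> b2" using assms disj by auto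
  have m: "b1 \<in> nbr G a1" "b2 \<notin> nbr G a1" "b2 \<in> nbr G a2" "b1 \<notin> nbr G a2"
     "a1 \<in> nbr G b1" "a2 \<notin> nbr G b1" "a2 \<in> nbr G b2" "a1 \<notin> nbr G b2"
    using assms by (auto simp: nbr_def insert_commute)
  have sub: "swp G a1 b1 a2 b2 \<subseteq> {{x, y} | x y. x \<in> VL \<and> y \<in> VR}"
    using assms by (auto simp: swp_def bip_graphs_def)
  have degG: "\<forall>x\<in>VL. deg G x = t" "\<forall>y\<in>VR. deg G y = s" using G by (auto simp: bip_graphs_def)
  have "deg (swp G a1 b1 a2 b2) z = deg G z" for z
    unfolding deg_def nbr_swp[OF \<open>a1 \<noteq> a2\<close> \<open>b1 \<noteq> b2\<close> d]
    using m card_swap1[OF finite_nbr[OF G]] by simp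
  then show ?thesis using sub degG by (simp add: bip_graphs_def)
qed


lemma switch:
  assumes u: "u \<in> VL" and x: "x \<in> VR" and y: "y \<in> VR" and xy: "x \<noteq> y"
    and Fx: "nbr F x = {}" and Fy: "{u,y} \<notin> F"
  shows "card {G\<in>B. F \<subseteq> G \<and> {u,y} \<in> G \<and> {u,x} \<notin> G}
       \<le> card {G\<in>B. F \<subseteq> G \<and> {u,x} \<in> G \<and> {u,y} \<notin> G}"
proof -
  define Ay where "Ay = {G\<in>B. F \<subseteq> G \<and> {u,y} \<in> G \<and> {u,x} \<notin> G}"
  define Ax where "Ax = {G\<in>B. F \<subseteq> G \<and> {u,x} \<in> G \<and> {u,y} \<notin> G}"
  define S where "S G = nbr G x - nbr G y" for G
  define S' where "S' G = nbr G y - nbr G x" for G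
  define \<phi> where "\<phi> = (\<lambda>(G,w). (swp G u y w x, w))"
  have finAy: "finite Ay" and finAx: "finite Ax"
    using finite_B by (auto simp: Ay_def Ax_def)
  have finS: "finite (S G)" "finite (S' G)" if "G \<in> B" for G
    using finite_nbr[OF that] by (auto simp: S_def S'_def)
  have dux: "u \<noteq> x" "u \<noteq> y" using u x y disj by auto
  have cxy: "card (nbr G x) = card (nbr G y)" if "G \<in> B" for G
  proof -
    have "deg G x = s" "deg G y = s" using that x y unfolding bip_graphs_def by auto
    then show ?thesis by (simp add: deg_def)
  qed
  have key: "w \<in> VL \<and> w \<noteq> u \<and> {w,x} \<in> G \<and> {w,y} \<notin> G \<and> w \<noteq> x \<and> w \<noteq> y"
    if G: "G \<in> Ay" and w: "w \<in> S G" for G w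
  proof -
    have GB: "G \<in> B" using G by (simp add: Ay_def)
    have "w \<in> nbr G x" "w \<notin> nbr G y" using w by (auto simp: S_def)
    moreover have "w \<in> VL" using nbr_R[OF GB x] \<open>w \<in> nbr G x\<close> by auto
    moreover have "{u,x} \<notin> G" using G by (simp add: Ay_def)
    moreover have "{w,x} \<in> G" using \<open>w \<in> nbr G x\<close> by (simp add: nbr_def insert_commute)
    moreover have "{w,y} \<notin> G" using \<open>w \<notin> nbr G y\<close> by (simp add: nbr_def insert_commute)
    moreover have "w \<noteq> x" "w \<noteq> y" using \<open>w \<in> VL\<close> disj x y by auto
    ultimately show ?thesis by metis
  qed
  have fwd: "swp G u y w x \<in> Ax \<and> w \<in> S' (swp G u y w x) \<and> card (S' (swp G u y w x)) = card (S G)"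
    if G: "G \<in> Ay" and w: "w \<in> S G" for G w
  proof -
    have GB: "G \<in> B" and FG: "F \<subseteq> G" and uy: "{u,y} \<in> G" and ux: "{u,x} \<notin> G"
      using G by (auto simp: Ay_def)
    have k: "w \<in> VL" "w \<noteq> u" "{w,x} \<in> G" "{w,y} \<notin> G" "w \<noteq> x" "w \<noteq> y"
      using key[OF G w] by auto
    have wxF: "{w,x} \<notin> F" using Fx by (auto simp: nbr_def insert_commute)
    have inB: "swp G u y w x \<in> B"
      using swp_B[OF GB u k(1) y x _ _ uy k(3) ux k(4)] k(2) xy by auto
    have FS: "F \<subseteq> swp G u y w x" using FG Fy wxF by (auto simp: swp_def)
    have mem: "{u,x} \<in> swp G u y w x" "{u,y} \<notin> swp G u y w x"
      using k dux xy by (auto simp: swp_def doubleton_eq_iff)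
    have d6: "u \<noteq> w" "y \<noteq> x" "u \<noteq> y" "u \<noteq> x" "w \<noteq> y" "w \<noteq> x" using k dux xy by auto
    have ny: "nbr (swp G u y w x) y = insert w (nbr G y - {u})"
      using nbr_swp[OF d6, of G y] d6 by simp
    have nx: "nbr (swp G u y w x) x = insert u (nbr G x - {w})"
      using nbr_swp[OF d6, of G x] d6 by auto
    have S'eq: "S' (swp G u y w x) = insert w (S' G - {u})"
      unfolding S'_def ny nx using d6 k by (auto simp: nbr_def insert_commute)
    have uS': "u \<in> S' G" using uy ux by (auto simp: S'_def nbr_def insert_commute)
    have wS': "w \<notin> S' G" using k by (auto simp: S'_def nbr_def insert_commute)
    have "card (S' (swp G u y w x)) = card (S' G)"
      unfolding S'eq by (rule card_swap1[OF finS(2)[OF GB] uS' wS'])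
    also have "\<dots> = card (S G)" unfolding S_def S'_def
      using cxy[OF GB] finite_nbr[OF GB] by (intro card_diff_sym) auto
    finally have c: "card (S' (swp G u y w x)) = card (S G)" .
    have "swp G u y w x \<in> Ax" using inB FS mem unfolding Ax_def by blast
    moreover have "w \<in> S' (swp G u y w x)" unfolding S'eq by simp
    ultimately show ?thesis using c by blast
  qed
  have cardpos: "card (S G) > 0" if G: "G \<in> Ay" for G
  proof -
    have GB: "G \<in> B" using G by (simp add: Ay_def)
    have "u \<in> S' G" using G by (auto simp: Ay_def S'_def nbr_def insert_commute)
    then have "card (S' G) > 0" using finS(2)[OF GB] by (auto simp: card_gt_0_iff)
    moreover have "card (S' G) = card (S G)" unfolding S_def S'_def
      using cxy[OF GB] finite_nbr[OF GB] by (intro card_diff_sym) auto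
    ultimately show ?thesis by simp
  qed
  have inj: "inj_on \<phi> (Sigma Ay S)"
  proof (rule inj_onI)
    fix p q assume p: "p \<in> Sigma Ay S" and q: "q \<in> Sigma Ay S" and e: "\<phi> p = \<phi> q"
    obtain G1 w1 where p': "p = (G1,w1)" by fastforce
    obtain G2 w2 where q': "q = (G2,w2)" by fastforce
    have eq: "(swp G1 u y w1 x, w1) = (swp G2 u y w2 x, w2)" using e unfolding p' q' \<phi>_def by (simp only: prod.case)
    then have w: "w1 = w2" by simp
    have sw: "swp G1 u y w1 x = swp G2 u y w1 x" using eq unfolding w by simp
    have inv: "swp (swp G u y w x) u x w y = G" if G: "G \<in> Ay" and w: "w \<in> S G" for G w
      using key[OF G w] G dux xy by (intro swp_inv) (auto simp: Ay_def)
    have "G1 \<in> Ay" "w1 \<in> S G1" using p unfolding p' by simp_all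
    moreover have "G2 \<in> Ay" "w1 \<in> S G2" using q unfolding q' w by simp_all
    ultimately
    have "G1 = G2" using inv[of G1 w1] inv[of G2 w1] sw by metis
    then show "p = q" using p' q' w by simp
  qed
  have phi: "\<phi> (G,w) = (swp G u y w x, w)" for G w by (simp add: \<phi>_def)
  have img: "\<phi> ` Sigma Ay S \<subseteq> Sigma Ax S'"
  proof (rule subsetI)
    fix q assume "q \<in> \<phi> ` Sigma Ay S"
    then obtain G w where Gw: "G \<in> Ay" "w \<in> S G" "q = \<phi> (G,w)" by blast
    have f: "swp G u y w x \<in> Ax" "w \<in> S' (swp G u y w x)" using fwd[OF Gw(1,2)] by blast+
    show "q \<in> Sigma Ax S'" unfolding Gw(3) phi using f by blast
  qed
  have finS'A: "\<forall>G\<in>Ax. finite (S' G)" using finS(2) by (simp add: Ax_def)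
  have finSA: "\<forall>G\<in>Ay. finite (S G)" using finS(1) by (simp add: Ay_def)
  have finSig: "finite (Sigma Ax S')"
    using finAx finS'A by (intro finite_SigmaI) blast+
  have one: "(\<Sum>w\<in>S G. 1 / real (card (S G))) = 1" if "G \<in> Ay" for G
    using cardpos[OF that] by simp
  have "real (card Ay) = (\<Sum>G\<in>Ay. (1::real))" by simp
  also have "\<dots> = (\<Sum>G\<in>Ay. \<Sum>w\<in>S G. 1 / real (card (S G)))"
    using one by (intro sum.cong) auto
  also have "\<dots> = (\<Sum>p\<in>Sigma Ay S. 1 / real (card (S (fst p))))"
    using sum.Sigma[OF finAy finSA, of "\<lambda>G w. 1 / real (card (S G))"] by (simp add: split_def)
  also have "\<dots> = (\<Sum>p\<in>Sigma Ay S. 1 / real (card (S' (fst (\<phi> p)))))"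
  proof (rule sum.cong)
    fix p assume "p \<in> Sigma Ay S"
    then obtain G w where Gw: "G \<in> Ay" "w \<in> S G" "p = (G,w)" by blast
    have c: "card (S' (swp G u y w x)) = card (S G)" using fwd[OF Gw(1,2)] by blast
    show "1 / real (card (S (fst p))) = 1 / real (card (S' (fst (\<phi> p))))"
      unfolding Gw(3) phi fst_conv c ..
  qed (rule refl)
  also have "\<dots> = (\<Sum>q\<in>\<phi> ` Sigma Ay S. 1 / real (card (S' (fst q))))"
    using sum.reindex[OF inj, of "\<lambda>q. 1 / real (card (S' (fst q)))"] by (simp add: o_def)
  also have "\<dots> \<le> (\<Sum>q\<in>Sigma Ax S'. 1 / real (card (S' (fst q))))"
    by (intro sum_mono2[OF finSig img]) simp
  also have "\<dots> = (\<Sum>G\<in>Ax. \<Sum>w\<in>S' G. 1 / real (card (S' G)))"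
    using sum.Sigma[OF finAx finS'A, of "\<lambda>G w. 1 / real (card (S' G))"] by (simp add: split_def)
  also have "\<dots> \<le> (\<Sum>G\<in>Ax. 1)"
  proof (rule sum_mono)
    fix G assume "G \<in> Ax"
    show "(\<Sum>w\<in>S' G. 1 / real (card (S' G))) \<le> 1"
      by (cases "card (S' G) = 0") simp_all
  qed
  also have "\<dots> = real (card Ax)" by simp
  finally show ?thesis unfolding Ay_def Ax_def by linarith
qed


lemma part1:
  assumes Bne: "B \<noteq> {}" and via: "viable VL VR s t F" and u: "u \<in> VL" and du: "deg F u < t"
  shows "measure_pmf.prob (sample_v VL VR s t F u) {v. deg F v > 0}
           \<le> real (card {x\<in>VR. deg F x > 0}) / real (card VR)"
proof -
  obtain G0 where G0: "G0 \<in> B" "F \<subseteq> G0" using via by (auto simp: viable_def)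
  define A where "A = {G\<in>B. F \<subseteq> G}"
  define N where "N = nbr F u"
  define P where "P = {x\<in>VR. deg F x > 0}"
  define Z where "Z = VR - P"
  define d where "d = deg F u"
  define c where "c y = card {G\<in>B. F \<subseteq> G \<and> {u,y} \<in> G}" for y
  have finA: "finite A" using finite_B by (simp add: A_def)
  have G0A: "G0 \<in> A" using G0 by (simp add: A_def)
  have AB: "G \<in> A \<Longrightarrow> G \<in> B" for G by (simp add: A_def)
  have finF: "finite (nbr F v)" for v
    using finite_nbr[OF G0(1)] nbr_mono[OF G0(2)] by (meson rev_finite_subset)
  have NP: "N \<subseteq> P"
  proof
    fix w assume "w \<in> N"
    then have "{u,w} \<in> F" by (simp add: N_def nbr_def)
    then have "w \<in> nbr G0 u" "u \<in> nbr F w" using G0 by (auto simp: nbr_def insert_commute)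
    then show "w \<in> P" using nbr_L[OF G0(1) u] finF[of w] by (auto simp: P_def deg_def card_gt_0_iff)
  qed
  have PVR: "P \<subseteq> VR" by (auto simp: P_def)
  have finN: "finite N" by (simp add: N_def finF)
  have cardN: "card N = d" by (simp add: N_def d_def deg_def)
  have NG: "N \<subseteq> nbr G u" if "G \<in> A" for G using that nbr_mono[of F G u] by (auto simp: A_def N_def)
  have GuVR: "nbr G u \<subseteq> VR" if "G \<in> A" for G using nbr_L[OF AB[OF that] u] .
  have cardGu: "card (nbr G u) = t" if "G \<in> A" for G
    using AB[OF that] u by (auto simp: bip_graphs_def deg_def)
  have cardD: "card (nbr G u - N) = t - d" if "G \<in> A" for G
    using card_Diff_subset[OF finN NG[OF that]] cardGu[OF that] cardN by simp
  have td: "t - d > 0" using du by (simp add: d_def)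
  have neD: "nbr G u - N \<noteq> {}" "finite (nbr G u - N)" if "G \<in> A" for G
    using cardD[OF that] td finite_nbr[OF AB[OF that]] by (metis card.empty less_irrefl finite_Diff)+
  have samp: "sample_v VL VR s t F u = pmf_of_set A \<bind> (\<lambda>G. pmf_of_set (nbr G u - N))"
  proof -
    have "B \<inter> {G. F \<subseteq> G} = A" by (auto simp: A_def)
    moreover have "A \<noteq> {}" using G0A by auto
    ultimately show ?thesis unfolding sample_v_def N_def using cond_pmf_of_set[OF finite_B] by simp
  qed
  have finVR: "finite (P - N)" "finite Z" "finite (VR - N)" using finR PVR by (auto simp: Z_def intro: finite_subset)
  have setE: "(nbr G u - N) \<inter> {v. deg F v > 0} = {y\<in>P - N. {u,y} \<in> G}" if "G \<in> A" for G
    using GuVR[OF that] by (auto simp: P_def nbr_def)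
  have setT: "nbr G u - N = {y\<in>VR - N. {u,y} \<in> G}" if "G \<in> A" for G
    using GuVR[OF that] by (auto simp: nbr_def)
  have cA: "{G\<in>A. {u,y} \<in> G} = {G\<in>B. F \<subseteq> G \<and> {u,y} \<in> G}" for y by (auto simp: A_def)
  define a where "a = (\<Sum>y\<in>P - N. c y)"
  define b where "b = (\<Sum>y\<in>Z. c y)"
  have sa: "(\<Sum>G\<in>A. card ((nbr G u - N) \<inter> {v. deg F v > 0})) = a"
  proof -
    have "(\<Sum>G\<in>A. card ((nbr G u - N) \<inter> {v. deg F v > 0})) = (\<Sum>G\<in>A. card {y\<in>P - N. {u,y} \<in> G})"
      using setE by (intro sum.cong) auto
    also have "\<dots> = (\<Sum>y\<in>P - N. card {G\<in>A. {u,y} \<in> G})" by (rule double_count[OF finA finVR(1)])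
    finally show ?thesis by (simp add: a_def c_def cA)
  qed
  have VRsplit: "VR - N = (P - N) \<union> Z" "(P - N) \<inter> Z = {}" using NP PVR by (auto simp: Z_def)
  have sab: "card A * (t - d) = a + b"
  proof -
    have "card A * (t - d) = (\<Sum>G\<in>A. card (nbr G u - N))" using cardD by simp
    also have "\<dots> = (\<Sum>G\<in>A. card {y\<in>VR - N. {u,y} \<in> G})" using setT by (intro sum.cong) auto
    also have "\<dots> = (\<Sum>y\<in>VR - N. card {G\<in>A. {u,y} \<in> G})" by (rule double_count[OF finA finVR(3)])
    also have "\<dots> = (\<Sum>y\<in>VR - N. c y)" by (simp add: c_def cA)
    also have "\<dots> = a + b" unfolding a_def b_def VRsplit(1) by (rule sum.union_disjoint[OF finVR(1,2) VRsplit(2)])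
    finally show ?thesis .
  qed
  have key: "c y \<le> c x" if y: "y \<in> P - N" and x: "x \<in> Z" for x y
  proof -
    have xVR: "x \<in> VR" and yVR: "y \<in> VR" using x y PVR by (auto simp: Z_def)
    have xy: "x \<noteq> y" using x y by (auto simp: Z_def)
    have Fx: "nbr F x = {}" using x finF[of x] by (auto simp: Z_def P_def deg_def)
    have Fy: "{u,y} \<notin> F" using y by (auto simp: N_def nbr_def)
    have sw: "card {G\<in>B. F \<subseteq> G \<and> {u,y} \<in> G \<and> {u,x} \<notin> G}
       \<le> card {G\<in>B. F \<subseteq> G \<and> {u,x} \<in> G \<and> {u,y} \<notin> G}"
      by (rule switch[OF u xVR yVR xy Fx Fy])
    have "c y = card {G\<in>B. (F \<subseteq> G \<and> {u,y} \<in> G) \<and> {u,x} \<in> G} + card {G\<in>B. (F \<subseteq> G \<and> {u,y} \<in> G) \<and> \<not> {u,x} \<in> G}"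
      unfolding c_def by (rule card_split[OF finite_B])
    moreover have "c x = card {G\<in>B. (F \<subseteq> G \<and> {u,x} \<in> G) \<and> {u,y} \<in> G} + card {G\<in>B. (F \<subseteq> G \<and> {u,x} \<in> G) \<and> \<not> {u,y} \<in> G}"
      unfolding c_def by (rule card_split[OF finite_B])
    moreover have "{G\<in>B. (F \<subseteq> G \<and> {u,y} \<in> G) \<and> {u,x} \<in> G} = {G\<in>B. (F \<subseteq> G \<and> {u,x} \<in> G) \<and> {u,y} \<in> G}" by blast
    ultimately show ?thesis using sw by (simp add: conj_assoc)
  qed
  have ineq1: "a * card Z \<le> card (P - N) * b"
  proof -
    have "a * card Z = (\<Sum>y\<in>P - N. \<Sum>x\<in>Z. c y)" by (simp add: a_def sum_distrib_left mult.commute)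
    also have "\<dots> \<le> (\<Sum>y\<in>P - N. \<Sum>x\<in>Z. c x)" using key by (intro sum_mono) auto
    also have "\<dots> = card (P - N) * b" by (simp add: b_def)
    finally show ?thesis .
  qed
  have cardVR: "card VR = card P + card Z" unfolding Z_def using finR PVR
    by (metis card_Diff_subset le_add_diff_inverse finite_subset card_mono)
  have cPN: "card (P - N) \<le> card P" using finVR PVR finR by (meson Diff_subset card_mono finite_subset)
  have ineq2: "a * card VR \<le> card P * (a + b)"
  proof -
    have "a * card VR = a * card P + a * card Z" by (simp add: cardVR algebra_simps)
    also have "\<dots> \<le> a * card P + card P * b" using ineq1 mult_right_mono[OF cPN, of b] by linarith
    finally show ?thesis by (simp add: algebra_simps)
  qed
  have abpos: "a + b > 0" using sab td G0A finA by (metis card_gt_0_iff empty_iff nat_0_less_mult_iff)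
  have "measure_pmf.prob (sample_v VL VR s t F u) {v. deg F v > 0}
      = (\<Sum>G\<in>A. real (card ((nbr G u - N) \<inter> {v. deg F v > 0})) / real (card (nbr G u - N))) / real (card A)"
    unfolding samp using G0A finA neD by (intro prob_bind_pmf_of_set) auto
  also have "\<dots> = (\<Sum>G\<in>A. real (card ((nbr G u - N) \<inter> {v. deg F v > 0})) / real (t - d)) / real (card A)"
    using cardD by (intro arg_cong2[where f="(/)"] sum.cong) auto
  also have "\<dots> = real a / real (a + b)"
  proof -
    have "(\<Sum>G\<in>A. real (card ((nbr G u - N) \<inter> {v. deg F v > 0})) / real (t - d)) = real a / real (t - d)"
      unfolding sum_divide_distrib[symmetric] of_nat_sum[symmetric] sa ..
    moreover have "real (a + b) = real (t - d) * real (card A)" unfolding sab[symmetric] by simp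
    ultimately show ?thesis by simp
  qed
  also have "\<dots> \<le> real (card P) / real (card VR)"
  proof -
    have "card VR > 0"
    proof -
      have "card (nbr G0 u) = t" using cardGu[OF G0A] .
      then have "nbr G0 u \<noteq> {}" using du by auto
      then show ?thesis using GuVR[OF G0A] finR by (auto simp: card_gt_0_iff)
    qed
    then show ?thesis using abpos ineq2
      by (simp add: divide_simps) (metis of_nat_le_iff of_nat_mult of_nat_add)
  qed
  finally show ?thesis by (simp add: P_def)
qed

end

lemma bip_graphs_swap: "bip_graphs VR VL t s = bip_graphs VL VR s t"
proof -
  have "{{x, y} | x y. x \<in> VR \<and> y \<in> VL} = {{x, y} | x y. x \<in> VL \<and> y \<in> VR}"
    by (auto simp: insert_commute)
  then show ?thesis unfolding bip_graphs_def by auto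
qed

theorem lemma4p4:
  fixes VL VR :: "'a set" and m n s t :: nat and F :: "'a set set"
  assumes "finite VL" and "finite VR" and "VL \<inter> VR = {}"
    and "card VL = n" and "card VR = m"
    and "bip_graphs VL VR s t \<noteq> {}"
    and "viable VL VR s t F"
  shows "(\<forall>u\<in>VL. deg F u < t \<longrightarrow>
            measure_pmf.prob (sample_v VL VR s t F u) {v. deg F v > 0}
              \<le> real (card {x\<in>VR. deg F x > 0}) / real (card VR))
       \<and> (\<forall>u\<in>VR. deg F u < s \<longrightarrow>
            measure_pmf.prob (sample_v VL VR s t F u) {v. deg F v > 0}
              \<le> real (card {x\<in>VL. deg F x > 0}) / real (card VL))"
proof
  interpret b1: bip VL VR s t using assms by unfold_locales auto
  interpret b2: bip VR VL t s using assms by unfold_locales auto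
  show "\<forall>u\<in>VL. deg F u < t \<longrightarrow>
            measure_pmf.prob (sample_v VL VR s t F u) {v. deg F v > 0}
              \<le> real (card {x\<in>VR. deg F x > 0}) / real (card VR)"
  proof (intro ballI impI)
    fix u assume "u \<in> VL" "deg F u < t"
    then show "measure_pmf.prob (sample_v VL VR s t F u) {v. deg F v > 0}
              \<le> real (card {x\<in>VR. deg F x > 0}) / real (card VR)"
      by (rule b1.part1[OF assms(6,7)])
  qed
  have e1: "sample_v VR VL t s F u = sample_v VL VR s t F u" for u
    by (simp add: sample_v_def bip_graphs_swap)
  have e2: "viable VR VL t s F = viable VL VR s t F"
    by (simp add: viable_def bip_graphs_swap)
  show "\<forall>u\<in>VR. deg F u < s \<longrightarrow>
            measure_pmf.prob (sample_v VL VR s t F u) {v. deg F v > 0}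
              \<le> real (card {x\<in>VL. deg F x > 0}) / real (card VL)"
  proof (intro ballI impI)
    fix u assume "u \<in> VR" "deg F u < s"
    have "bip_graphs VR VL t s \<noteq> {}" "viable VR VL t s F"
      using assms(6,7) by (simp_all add: bip_graphs_swap e2)
    from b2.part1[OF this \<open>u \<in> VR\<close> \<open>deg F u < s\<close>]
    show "measure_pmf.prob (sample_v VL VR s t F u) {v. deg F v > 0}
              \<le> real (card {x\<in>VL. deg F x > 0}) / real (card VL)"
      by (simp only: e1)
  qed
qed

end
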